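(* If an analytic function $f(z)=\sum_{n\ge0}f_nz^n$ on $\mathbb{D}$ satisfies $\sup_{n\ge0}|f_n|e^{c\sqrt n}<\infty$ for some $c>0$, then there exists $c'>0$ such that, with $G(t)=\exp(-c'/t)$ and $M_n=\int_{\mathbb{D}}G(1-|z|)|z|^{2n}\,dA(z)$, one has $\sum_{n\ge0}|f_n|^2/M_n<\infty$, i.e. $f\in H_2^*(M)$ for $M=\{M_n\}_{n\ge0}$.
   Context: $\mathbb{D}$ is the unit disk and $dA$ area measure normalized so that $A(\mathbb{D})=1$. $H_2^*(M)$ denotes the space of power series $\sum f_nz^n$ with $\sum_n|f_n|^2/M_n<\infty$. *)

theory Defs
  imports "HOL-Analysis.Analysis"
begin

text \<open>Normalized area measure on the unit disk: dA = (1/pi) dx dy, so A(D) = 1.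
  The weight G(t) = exp(-c'/t) and the moment sequence
  M_n = integral over D of G(1-|z|) |z|^(2n) dA(z).\<close>

definition weightG :: "real \<Rightarrow> real \<Rightarrow> real" where
  "weightG c' t = exp (- c' / t)"

definition momentM :: "real \<Rightarrow> nat \<Rightarrow> real" where
  "momentM c' n = (1 / pi) * integral (ball (0::complex) 1)
      (\<lambda>z. weightG c' (1 - norm z) * norm z ^ (2 * n))"

definition in_H2star :: "(nat \<Rightarrow> real) \<Rightarrow> (nat \<Rightarrow> complex) \<Rightarrow> bool" where
  "in_H2star M fc \<longleftrightarrow> summable (\<lambda>n. (norm (fc n))\<^sup>2 / M n)"

end

theory Submission
  imports Defs "HOL-Real_Asymp.Real_Asymp"
begin

lemma box_lower:
  fixes c' s :: real and n :: nat
  defines "g \<equiv> (\<lambda>z::complex. weightG c' (1 - norm z) * norm z ^ (2 * n))"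
  assumes c': "0 < c'" and s: "0 < s" "s \<le> 1/4" and gi: "g integrable_on ball 0 1"
  shows "exp (- c' / s) * (1 - 2 * s) ^ (2*n) * (s * s / 2) \<le> integral (ball 0 1) g"
proof -
  define S where "S = cbox (Complex (1-2 * s) 0) (Complex (1 - 3/2 * s) s)"
  define k where "k = exp (- c' / s) * (1 - 2 * s) ^ (2*n)"
  have inS: "1 - 2 * s \<le> norm z \<and> norm z \<le> 1 - s" if "z \<in> S" for z
  proof -
    from that have r: "1-2 * s \<le> Re z" "Re z \<le> 1 - 3/2 * s" and i: "0 \<le> Im z" "Im z \<le> s"
      by (auto simp: S_def in_cbox_complex_iff)
    have lo: "1 - 2 * s \<le> norm z" using r abs_Re_le_cmod[of z] s by linarith
    have sq: "(norm z)^2 \<le> (1-s)^2"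
    proof -
      have "(norm z)^2 = (Re z)^2 + (Im z)^2" by (simp add: cmod_power2)
      also have "\<dots> \<le> (1 - 3/2 * s)^2 + s^2"
        using r i s by (intro add_mono power_mono) auto
      also have "\<dots> \<le> (1-s)^2" using s by (simp add: power2_eq_square algebra_simps)
      finally show ?thesis .
    qed
    have "0 \<le> 1 - s" using s by simp
    with sq have "norm z \<le> 1 - s" by (rule power2_le_imp_le)
    with lo show ?thesis by simp
  qed
  have Ssub: "S \<subseteq> ball 0 1" using inS s by force
  have cS: "measure lborel S = s * s / 2"
    using s by (simp add: S_def content_cbox_cases Basis_complex_def)
  have h: "((\<lambda>z. if z \<in> S then k else 0) has_integral (measure lborel S *\<^sub>R k)) (ball 0 1)"
  proof -
    have h0: "((\<lambda>z. k) has_integral (measure lborel S *\<^sub>R k)) S"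
      unfolding S_def by (rule has_integral_const)
    show ?thesis by (subst has_integral_restrict[OF Ssub]) (rule h0)
  qed
  have le: "(if z \<in> S then k else 0) \<le> g z" if "z \<in> ball 0 1" for z
  proof (cases "z \<in> S")
    case True
    then have z: "1 - 2 * s \<le> norm z" "norm z \<le> 1 - s" using inS by auto
    have w1: "exp (- c' / s) \<le> weightG c' (1 - norm z)"
      unfolding weightG_def using z s c' by (simp add: frac_le)
    have w2: "(1 - 2 * s) ^ (2*n) \<le> norm z ^ (2*n)"
      using z s by (intro power_mono) auto
    have "k \<le> g z" unfolding k_def g_def
      by (rule mult_mono[OF w1 w2]) (use s in \<open>auto simp: weightG_def\<close>)
    then show ?thesis using True by simp
  next
    case False
    then show ?thesis using that unfolding g_def weightG_def by simp
  qed
  have "measure lborel S *\<^sub>R k \<le> integral (ball 0 1) g"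
    by (rule has_integral_le[OF h integrable_integral[OF gi] le])
  then show ?thesis using cS by (simp add: k_def mult_ac)
qed


lemma summ_aux:
  fixes c :: real assumes c: "c > 0"
  shows "summable (\<lambda>n::nat. (real n + 1) * exp (- c * sqrt (real n)))"
proof (rule summable_comparison_test_bigo)
  show "summable (\<lambda>n::nat. norm (real n powr -2))"
    using summable_real_powr_iff[of "-2"] by simp
  show "(\<lambda>n::nat. (real n + 1) * exp (- c * sqrt (real n))) \<in> O(\<lambda>n. real n powr -2)"
    using c by real_asymp
qed

lemma exp_le_one_minus:
  fixes x :: real assumes "0 \<le> x" "x \<le> 1/2"
  shows "exp (- 2 * x) \<le> 1 - x"
proof -
  have "- 2 * x \<le> - x - 2 * x\<^sup>2" using mult_right_mono[of "2*x" 1 x] assms by (simp add: power2_eq_square algebra_simps)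
  also have "\<dots> \<le> ln (1 - x)" by (rule ln_one_minus_pos_lower_bound[OF assms])
  finally have "exp (- 2 * x) \<le> exp (ln (1 - x))" by simp
  also have "exp (ln (1 - x)) = 1 - x" using assms by simp
  finally show ?thesis .
qed


lemma alg_eq:
  fixes A X Y e m :: real
  assumes "Y > 0" "e > 0" "m > 0"
  shows "A * X / (Y * (e\<^sup>2 / (2 * m)) / pi) = 2 * pi * A / e\<^sup>2 * m * (X / Y)"
  using assms by (simp add: field_simps)

theorem mainTheorem14:
  fixes f :: "complex \<Rightarrow> complex" and fc :: "nat \<Rightarrow> complex" and c :: real
  assumes "f holomorphic_on ball 0 1"
    and "\<And>z. z \<in> ball 0 1 \<Longrightarrow> (\<lambda>n. fc n * z ^ n) sums f z"
    and "c > 0"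
    and "bdd_above (range (\<lambda>n. norm (fc n) * exp (c * sqrt (real n))))"
  shows "\<exists>c' > 0. in_H2star (momentM c') fc"
proof -
  have c: "c > 0" by fact
  obtain B where B: "\<And>n. norm (fc n) * exp (c * sqrt (real n)) \<le> B"
    using assms(4) by (auto simp: bdd_above_def)
  define e where "e = min (c/16) (1/4)"
  define c' where "c' = e * c / 2"
  have e: "0 < e" "e \<le> 1/4" "8 * e \<le> c/2" using c by (auto simp: e_def)
  have c': "0 < c'" using e c by (simp add: c'_def)
  define K where "K = 2 * pi * B\<^sup>2 * exp c / e\<^sup>2"
  have bound: "norm ((norm (fc n))\<^sup>2 / momentM c' n) \<le> K * ((real n + 1) * exp (- c * sqrt (real n)))" for n
  proof -
    define g where "g = (\<lambda>z::complex. weightG c' (1 - norm z) * norm z ^ (2 * n))"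
    have Kpos: "0 \<le> K * ((real n + 1) * exp (- c * sqrt (real n)))"
      unfolding K_def by simp
    show ?thesis
    proof (cases "g integrable_on ball 0 1")
      case False
      then have "momentM c' n = 0" by (simp add: momentM_def g_def not_integrable_integral)
      then show ?thesis using Kpos by simp
    next
      case True
      define s where "s = e / sqrt (real n + 1)"
      have sq1: "1 \<le> sqrt (real n + 1)" by simp
      have "e / sqrt (real n + 1) \<le> e / 1" using e sq1 by (intro divide_left_mono) auto
      then have "s \<le> e" unfolding s_def by simp
      moreover have "0 < s" unfolding s_def using e by simp
      ultimately have s: "0 < s" "s \<le> 1/4" using e by linarith+
      have low: "exp (- c' / s) * (1 - 2 * s) ^ (2*n) * (s * s / 2) \<le> integral (ball 0 1) g"
        using box_lower[OF c' s True[unfolded g_def]] unfolding g_def .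
      have p1: "exp (- 8 * s * real n) \<le> (1 - 2 * s) ^ (2*n)"
      proof -
        have "exp (- 2 * (2 * s)) ^ (2 * n) = exp (real (2 * n) * (- 2 * (2 * s)))"
          by (rule exp_of_nat_mult[symmetric])
        also have "real (2 * n) * (- 2 * (2 * s)) = - 8 * s * real n" by simp
        finally have "exp (- 8 * s * real n) = exp (- 2 * (2 * s)) ^ (2 * n)" by simp
        also have "\<dots> \<le> (1 - 2 * s) ^ (2*n)"
          using s exp_le_one_minus[of "2 * s"] by (intro power_mono) auto
        finally show ?thesis .
      qed
      have p2: "c' / s = c / 2 * sqrt (real n + 1)"
        using e unfolding c'_def s_def by (simp add: field_simps)
      have p3: "8 * s * real n \<le> c / 2 * sqrt (real n + 1)"
      proof -
        have "real n \<le> sqrt (real n + 1) * sqrt (real n + 1)" by simp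
        then have "real n / sqrt (real n + 1) \<le> sqrt (real n + 1)"
          using sq1 by (simp add: divide_le_eq)
        then have "8 * s * real n = 8 * e * (real n / sqrt (real n + 1))"
          by (simp add: s_def)
        also have "\<dots> \<le> c / 2 * sqrt (real n + 1)"
          using e \<open>real n / sqrt (real n + 1) \<le> sqrt (real n + 1)\<close>
          by (intro mult_mono) auto
        finally show ?thesis .
      qed
      have ss: "s * s = e\<^sup>2 / (real n + 1)"
        unfolding s_def by (simp add: power2_eq_square field_simps)
      define L where "L = exp (- c * sqrt (real n + 1)) * (e\<^sup>2 / (2 * (real n + 1)))"
      have Lpos: "0 < L" unfolding L_def using e by simp
      have "L \<le> exp (- c' / s) * (1 - 2 * s) ^ (2*n) * (s * s / 2)"
      proof -
        have "exp (- c * sqrt (real n + 1)) \<le> exp (- c' / s) * exp (- 8 * s * real n)"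
        proof -
          have "- c * sqrt (real n + 1) \<le> - c' / s + - 8 * s * real n" using p2 p3 by linarith
          then have "exp (- c * sqrt (real n + 1)) \<le> exp (- c' / s + - 8 * s * real n)" by simp
          then show ?thesis by (simp only: exp_add)
        qed
        also have "\<dots> \<le> exp (- c' / s) * (1 - 2 * s) ^ (2*n)"
          using p1 by simp
        finally have H: "exp (- c * sqrt (real n + 1)) \<le> exp (- c' / s) * (1 - 2 * s) ^ (2*n)" .
        have eq: "e\<^sup>2 / (2 * (real n + 1)) = e\<^sup>2 / (real n + 1) / 2" by simp
        show ?thesis unfolding L_def ss eq
          by (rule mult_right_mono[OF H]) simp
      qed
      with low have MLow: "L / pi \<le> momentM c' n"
        unfolding momentM_def g_def by (simp add: divide_right_mono)
      have Mpos: "0 < momentM c' n" using MLow Lpos pi_gt_zero by (meson divide_pos_pos less_le_trans)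
      have fB: "norm (fc n) \<le> B * exp (- c * sqrt (real n))"
      proof -
        have "norm (fc n) = (norm (fc n) * exp (c * sqrt (real n))) * exp (- c * sqrt (real n))"
          using exp_minus_inverse[of "c * sqrt (real n)"] by (simp add: mult.assoc)
        also have "\<dots> \<le> B * exp (- c * sqrt (real n))"
          using B[of n] by (intro mult_right_mono) auto
        finally show ?thesis .
      qed
      have fB2: "(norm (fc n))\<^sup>2 \<le> B\<^sup>2 * exp (- 2 * c * sqrt (real n))"
      proof -
        have "(norm (fc n))\<^sup>2 \<le> (B * exp (- c * sqrt (real n)))\<^sup>2"
          using fB by (intro power_mono) auto
        also have "\<dots> = B\<^sup>2 * exp (- 2 * c * sqrt (real n))"
          by (simp add: power_mult_distrib power2_eq_square exp_add[symmetric])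
        finally show ?thesis .
      qed
      have "norm ((norm (fc n))\<^sup>2 / momentM c' n) = (norm (fc n))\<^sup>2 / momentM c' n"
        using Mpos by simp
      also have "\<dots> \<le> B\<^sup>2 * exp (- 2 * c * sqrt (real n)) / (L / pi)"
        using Mpos MLow Lpos fB2 by (intro frac_le) auto
      also have "\<dots> = 2 * pi * B\<^sup>2 / e\<^sup>2 * (real n + 1) * exp (c * sqrt (real n + 1) - 2 * c * sqrt (real n))"
      proof -
        have XY: "exp (- 2 * c * sqrt (real n)) / exp (- c * sqrt (real n + 1)) = exp (c * sqrt (real n + 1) - 2 * c * sqrt (real n))"
          by (simp add: exp_diff[symmetric])
        have Y: "exp (- c * sqrt (real n + 1)) > 0" by simp
        show ?thesis unfolding L_def XY[symmetric]
          by (rule alg_eq[OF Y e(1)]) simp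
      qed
      also have "\<dots> \<le> 2 * pi * B\<^sup>2 / e\<^sup>2 * (real n + 1) * exp (c - c * sqrt (real n))"
      proof -
        have "sqrt (real n + 1) \<le> sqrt (real n) + 1"
          using sqrt_add_le_add_sqrt[of "real n" 1] by simp
        then have "c * sqrt (real n + 1) \<le> c * sqrt (real n) + c"
        proof -
          have "c * sqrt (real n + 1) \<le> c * (sqrt (real n) + 1)"
            using c \<open>sqrt (real n + 1) \<le> sqrt (real n) + 1\<close> by (intro mult_left_mono) auto
          then show ?thesis by (simp add: distrib_left)
        qed
        then show ?thesis by (intro mult_left_mono) (auto simp del: exp_le_cancel_iff intro!: exp_mono)
      qed
      also have "\<dots> = K * ((real n + 1) * exp (- c * sqrt (real n)))"
      proof -
        have "exp (c - c * sqrt (real n)) = exp c * exp (- c * sqrt (real n))"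
          by (simp add: exp_add[symmetric])
        then show ?thesis unfolding K_def by simp
      qed
      finally show ?thesis .
    qed
  qed
  have "summable (\<lambda>n. (norm (fc n))\<^sup>2 / momentM c' n)"
    by (rule summable_comparison_test[OF _ summable_mult[OF summ_aux[OF c]]]) (use bound in blast)
  then show ?thesis using c' unfolding in_H2star_def by blast
qed

end
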